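(* Every knot diagram $k \in \mathbb{CC}$ is equal, via the axioms of braided monoidal categories, to a knot diagram in bridge position, i.e.\ one whose string diagram has all of its caps appearing above all of its cups.
   Context: $\mathbb{CC}$ is the free (strict) braided monoidal category generated by objects $\uparrow, \downarrow$ and four generating morphisms, with no equations imposed between them: caps $\mathrm{cap}_r : I \to \uparrow \otimes \downarrow$, $\mathrm{cap}_l : I \to \downarrow \otimes \uparrow$ and cups $\mathrm{cup}_r : \downarrow \otimes \uparrow \to I$, $\mathrm{cup}_l : \uparrow \otimes \downarrow \to I$. String diagrams are read from top (domain) to bottom (codomain). A knot (diagram) in $\mathbb{CC}$ is a morphism $I \to I$ whose string diagram has a single connected component. *)

theory Defs
  imports Main
begin

text \<open>Objects of CC: lists of orientations (strict monoidal: tensor = append, unit = []).\<close>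
datatype ori = Up | Down
type_synonym obj = "ori list"

datatype gen = CapR | CapL | CupR | CupL

fun gdom :: "gen \<Rightarrow> obj" where
  "gdom CapR = []" | "gdom CapL = []" | "gdom CupR = [Down, Up]" | "gdom CupL = [Up, Down]"

fun gcod :: "gen \<Rightarrow> obj" where
  "gcod CapR = [Up, Down]" | "gcod CapL = [Down, Up]" | "gcod CupR = []" | "gcod CupL = []"

text \<open>Raw morphism terms of the free strict braided monoidal category.
  Comp f g is "f then g" (f on top, g below).\<close>
datatype trm = Id obj | Gen gen | Br obj obj | BrInv obj obj | Comp trm trm | Tens trm trm

inductive typed :: "trm \<Rightarrow> obj \<Rightarrow> obj \<Rightarrow> bool" where
  "typed (Id A) A A"
| "typed (Gen g) (gdom g) (gcod g)"
| "typed (Br A B) (A @ B) (B @ A)"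
| "typed (BrInv A B) (B @ A) (A @ B)"
| "typed f A B \<Longrightarrow> typed g B C \<Longrightarrow> typed (Comp f g) A C"
| "typed f A B \<Longrightarrow> typed g C D \<Longrightarrow> typed (Tens f g) (A @ C) (B @ D)"

inductive eqv :: "trm \<Rightarrow> trm \<Rightarrow> bool" where
  refl: "typed f A B \<Longrightarrow> eqv f f"
| sym: "eqv f g \<Longrightarrow> eqv g f"
| trans: "eqv f g \<Longrightarrow> eqv g h \<Longrightarrow> eqv f h"
| comp_cong: "eqv f f' \<Longrightarrow> eqv g g' \<Longrightarrow> typed f A B \<Longrightarrow> typed g B C \<Longrightarrow>
     typed f' A B \<Longrightarrow> typed g' B C \<Longrightarrow> eqv (Comp f g) (Comp f' g')"
| tens_cong: "eqv f f' \<Longrightarrow> eqv g g' \<Longrightarrow> typed f A B \<Longrightarrow> typed g C D \<Longrightarrow>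
     typed f' A B \<Longrightarrow> typed g' C D \<Longrightarrow> eqv (Tens f g) (Tens f' g')"
| id_left: "typed f A B \<Longrightarrow> eqv (Comp (Id A) f) f"
| id_right: "typed f A B \<Longrightarrow> eqv (Comp f (Id B)) f"
| comp_assoc: "typed f A B \<Longrightarrow> typed g B C \<Longrightarrow> typed h C D \<Longrightarrow>
     eqv (Comp (Comp f g) h) (Comp f (Comp g h))"
| tens_id: "eqv (Tens (Id A) (Id B)) (Id (A @ B))"
| tens_unit_left: "typed f A B \<Longrightarrow> eqv (Tens (Id []) f) f"
| tens_unit_right: "typed f A B \<Longrightarrow> eqv (Tens f (Id [])) f"
| tens_assoc: "typed f A B \<Longrightarrow> typed g C D \<Longrightarrow> typed h E F \<Longrightarrow>
     eqv (Tens (Tens f g) h) (Tens f (Tens g h))"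
| interchange: "typed f A B \<Longrightarrow> typed g B C \<Longrightarrow> typed h D E \<Longrightarrow> typed k E F \<Longrightarrow>
     eqv (Tens (Comp f g) (Comp h k)) (Comp (Tens f h) (Tens g k))"
| br_inv1: "eqv (Comp (Br A B) (BrInv A B)) (Id (A @ B))"
| br_inv2: "eqv (Comp (BrInv A B) (Br A B)) (Id (B @ A))"
| br_nat: "typed f A A' \<Longrightarrow> typed g B B' \<Longrightarrow>
     eqv (Comp (Tens f g) (Br A' B')) (Comp (Br A B) (Tens g f))"
| hex1: "eqv (Br A (B @ C)) (Comp (Tens (Br A B) (Id C)) (Tens (Id B) (Br A C)))"
| hex2: "eqv (Br (A @ B) C) (Comp (Tens (Id A) (Br B C)) (Tens (Br A C) (Id B)))"

text \<open>Syntactic domain/codomain (only meaningful for typed terms).\<close>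
fun tdom :: "trm \<Rightarrow> obj" and tcod :: "trm \<Rightarrow> obj" where
  "tdom (Id A) = A" | "tdom (Gen g) = gdom g" | "tdom (Br A B) = A @ B"
| "tdom (BrInv A B) = B @ A" | "tdom (Comp f g) = tdom f" | "tdom (Tens f g) = tdom f @ tdom g"
| "tcod (Id A) = A" | "tcod (Gen g) = gcod g" | "tcod (Br A B) = B @ A"
| "tcod (BrInv A B) = A @ B" | "tcod (Comp f g) = tcod g" | "tcod (Tens f g) = tcod f @ tcod g"

text \<open>The underlying string diagram as a graph: (number of wire segments,
  map domain positions \<rightarrow> segments, map codomain positions \<rightarrow> segments,
  edges joining segments). Segments are 0..<n. Crossings do not join strands.\<close>
fun diag :: "trm \<Rightarrow> nat \<times> (nat \<Rightarrow> nat) \<times> (nat \<Rightarrow> nat) \<times> (nat \<times> nat) set" where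
  "diag (Id A) = (length A, id, id, {})"
| "diag (Gen g) = (1, \<lambda>_. 0, \<lambda>_. 0, {})"
| "diag (Br A B) = (length A + length B, id,
     \<lambda>j. if j < length B then length A + j else j - length B, {})"
| "diag (BrInv A B) = (length A + length B,
     \<lambda>j. if j < length B then length A + j else j - length B, id, {})"
| "diag (Comp f g) = (case diag f of (n1, d1, c1, E1) \<Rightarrow> case diag g of (n2, d2, c2, E2) \<Rightarrow>
     (n1 + n2, d1, \<lambda>j. n1 + c2 j,
      E1 \<union> {(n1 + a, n1 + b) | a b. (a, b) \<in> E2}
         \<union> {(c1 j, n1 + d2 j) | j. j < length (tcod f)}))"
| "diag (Tens f g) = (case diag f of (n1, d1, c1, E1) \<Rightarrow> case diag g of (n2, d2, c2, E2) \<Rightarrow>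
     (n1 + n2,
      \<lambda>j. if j < length (tdom f) then d1 j else n1 + d2 (j - length (tdom f)),
      \<lambda>j. if j < length (tcod f) then c1 j else n1 + c2 (j - length (tcod f)),
      E1 \<union> {(n1 + a, n1 + b) | a b. (a, b) \<in> E2}))"

definition knot :: "trm \<Rightarrow> bool" where
  "knot k \<longleftrightarrow> typed k [] [] \<and>
     (case diag k of (n, _, _, E) \<Rightarrow>
        0 < n \<and> (\<forall>a < n. \<forall>b < n. (a, b) \<in> (E \<union> E\<inverse>)\<^sup>*))"

fun gens :: "trm \<Rightarrow> gen set" where
  "gens (Gen g) = {g}"
| "gens (Comp f g) = gens f \<union> gens g"
| "gens (Tens f g) = gens f \<union> gens g"
| "gens _ = {}"

definition bridge_position :: "trm \<Rightarrow> bool" where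
  "bridge_position k \<longleftrightarrow> (\<exists>c b A. k = Comp c b \<and> typed c [] A \<and> typed b A [] \<and>
     gens c \<inter> {CupR, CupL} = {} \<and> gens b \<inter> {CapR, CapL} = {})"

end

theory Submission
  imports Defs
begin


fun wt :: "trm \<Rightarrow> bool" where
  "wt (Comp f g) = (wt f \<and> wt g \<and> tcod f = tdom g)"
| "wt (Tens f g) = (wt f \<and> wt g)"
| "wt _ = True"

lemma typed_imp: "typed t A B \<Longrightarrow> wt t \<and> tdom t = A \<and> tcod t = B"
  by (induction rule: typed.induct) auto

lemma wt_imp: "wt t \<Longrightarrow> typed t (tdom t) (tcod t)"
  by (induction t) (auto intro: typed.intros)

lemma typed_iff: "typed t A B \<longleftrightarrow> wt t \<and> tdom t = A \<and> tcod t = B"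
  using typed_imp wt_imp by blast

definition nseg :: "trm \<Rightarrow> nat" where "nseg t = fst (diag t)"
definition dmap :: "trm \<Rightarrow> nat \<Rightarrow> nat" where "dmap t = fst (snd (diag t))"
definition cmap :: "trm \<Rightarrow> nat \<Rightarrow> nat" where "cmap t = fst (snd (snd (diag t)))"
definition edges :: "trm \<Rightarrow> (nat \<times> nat) set" where "edges t = snd (snd (snd (diag t)))"

definition shift :: "nat \<Rightarrow> (nat \<times> nat) set \<Rightarrow> (nat \<times> nat) set" where
  "shift k E = {(k + a, k + b) | a b. (a, b) \<in> E}"

lemma diag_eq: "diag t = (nseg t, dmap t, cmap t, edges t)"
  by (simp add: nseg_def dmap_def cmap_def edges_def)

lemma diag_Comp': "diag (Comp f g) = (nseg f + nseg g, dmap f, (\<lambda>j. nseg f + cmap g j),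
   edges f \<union> shift (nseg f) (edges g) \<union> {(cmap f j, nseg f + dmap g j) | j. j < length (tcod f)})"
  by (simp only: diag.simps diag_eq[of f] diag_eq[of g]) (simp add: shift_def)

lemma diag_Tens': "diag (Tens f g) = (nseg f + nseg g,
  (\<lambda>j. if j < length (tdom f) then dmap f j else nseg f + dmap g (j - length (tdom f))),
  (\<lambda>j. if j < length (tcod f) then cmap f j else nseg f + cmap g (j - length (tcod f))),
  edges f \<union> shift (nseg f) (edges g))"
  by (simp only: diag.simps diag_eq[of f] diag_eq[of g]) (simp add: shift_def)

lemma diag_Comp_sel:
  "nseg (Comp f g) = nseg f + nseg g"
  "dmap (Comp f g) = dmap f"
  "cmap (Comp f g) = (\<lambda>j. nseg f + cmap g j)"
  "edges (Comp f g) = edges f \<union> shift (nseg f) (edges g)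
      \<union> {(cmap f j, nseg f + dmap g j) | j. j < length (tcod f)}"
  by (simp_all only: nseg_def dmap_def cmap_def edges_def diag_Comp' fst_conv snd_conv)

lemma diag_Tens_sel:
  "nseg (Tens f g) = nseg f + nseg g"
  "dmap (Tens f g) = (\<lambda>j. if j < length (tdom f) then dmap f j else nseg f + dmap g (j - length (tdom f)))"
  "cmap (Tens f g) = (\<lambda>j. if j < length (tcod f) then cmap f j else nseg f + cmap g (j - length (tcod f)))"
  "edges (Tens f g) = edges f \<union> shift (nseg f) (edges g)"
  by (simp_all only: nseg_def dmap_def cmap_def edges_def diag_Tens' fst_conv snd_conv)

lemma diag_other_sel:
  "nseg (Id A) = length A" "dmap (Id A) = (\<lambda>j. j)" "cmap (Id A) = (\<lambda>j. j)" "edges (Id A) = {}"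
  "nseg (Gen g) = 1" "dmap (Gen g) = (\<lambda>_. 0)" "cmap (Gen g) = (\<lambda>_. 0)" "edges (Gen g) = {}"
  "nseg (Br A B) = length A + length B" "dmap (Br A B) = (\<lambda>j. j)"
  "cmap (Br A B) = (\<lambda>j. if j < length B then length A + j else j - length B)" "edges (Br A B) = {}"
  "nseg (BrInv A B) = length A + length B" "cmap (BrInv A B) = (\<lambda>j. j)"
  "dmap (BrInv A B) = (\<lambda>j. if j < length B then length A + j else j - length B)" "edges (BrInv A B) = {}"
  by (simp_all add: nseg_def dmap_def cmap_def edges_def id_def)

lemmas diag_sel = diag_Comp_sel diag_Tens_sel diag_other_sel

lemma wf_diag: "wt t \<Longrightarrow> (\<forall>j<length (tdom t). dmap t j < nseg t) \<and> (\<forall>j<length (tcod t). cmap t j < nseg t)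
   \<and> (\<forall>(a,b)\<in>edges t. a < nseg t \<and> b < nseg t)"
proof (induction t)
  case (Comp f g)
  then show ?case by (auto simp: diag_sel shift_def)
next
  case (Tens f g)
  then show ?case by (auto simp: diag_sel shift_def)
qed (auto simp: diag_sel)



definition conn :: "(nat \<times> nat) set \<Rightarrow> (nat \<times> nat) set" where
  "conn E = (E \<union> E\<inverse>)\<^sup>*"

lemma conn_refl[simp]: "(a, a) \<in> conn E"
  by (simp add: conn_def)

lemma conn_edge: "(a, b) \<in> E \<Longrightarrow> (a, b) \<in> conn E"
  by (auto simp: conn_def)

lemma conn_edge': "(b, a) \<in> E \<Longrightarrow> (a, b) \<in> conn E"
  by (auto simp: conn_def)

lemma conn_trans: "(a, b) \<in> conn E \<Longrightarrow> (b, c) \<in> conn E \<Longrightarrow> (a, c) \<in> conn E"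
  by (auto simp: conn_def)

lemma conn_sym: "(a, b) \<in> conn E \<Longrightarrow> (b, a) \<in> conn E"
proof -
  assume "(a, b) \<in> conn E"
  then have "(a, b) \<in> (E \<union> E\<inverse>)\<^sup>*" by (simp add: conn_def)
  then have "(b, a) \<in> ((E \<union> E\<inverse>)\<^sup>*)\<inverse>" by simp
  then have "(b, a) \<in> ((E \<union> E\<inverse>)\<inverse>)\<^sup>*" by (simp only: rtrancl_converse)
  moreover have "(E \<union> E\<inverse>)\<inverse> = E \<union> E\<inverse>" by auto
  ultimately show ?thesis by (simp add: conn_def)
qed

lemma conn_mono: "(a, b) \<in> conn E \<Longrightarrow> E \<subseteq> F \<Longrightarrow> (a, b) \<in> conn F"
  unfolding conn_def by (metis Un_mono converse_mono rtrancl_mono subsetD)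

lemma conn_map:
  assumes "\<forall>(a, b) \<in> E. (f a, f b) \<in> conn F" and "(a, b) \<in> conn E"
  shows "(f a, f b) \<in> conn F"
proof -
  have "(a, b) \<in> (E \<union> E\<inverse>)\<^sup>*" using assms(2) by (simp add: conn_def)
  then show ?thesis
  proof (induction rule: rtrancl_induct)
    case base then show ?case by simp
  next
    case (step y z)
    then have "(f y, f z) \<in> conn F" using assms(1) conn_sym by blast
    then show ?case using step.IH conn_trans by blast
  qed
qed

lemma conn_shift: "(a, b) \<in> conn E \<Longrightarrow> (k + a, k + b) \<in> conn (shift k E)"
  by (rule conn_map[of E "\<lambda>x. k + x"]) (auto simp: shift_def intro: conn_edge)

lemma conn_shift_mono: "(a, b) \<in> conn E \<Longrightarrow> shift k E \<subseteq> F \<Longrightarrow> (k + a, k + b) \<in> conn F"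
  using conn_shift conn_mono by blast

definition simc :: "trm \<Rightarrow> trm \<Rightarrow> (nat \<Rightarrow> nat) \<Rightarrow> bool" where
  "simc t t' \<phi> \<longleftrightarrow> (\<forall>x<nseg t. \<phi> x < nseg t')
    \<and> (\<forall>(a, b) \<in> edges t. (\<phi> a, \<phi> b) \<in> conn (edges t'))
    \<and> (\<forall>j<length (tdom t). (\<phi> (dmap t j), dmap t' j) \<in> conn (edges t'))
    \<and> (\<forall>j<length (tcod t). (\<phi> (cmap t j), cmap t' j) \<in> conn (edges t'))
    \<and> (\<forall>y<nseg t'. \<exists>x<nseg t. (y, \<phi> x) \<in> conn (edges t'))"

definition Sim :: "trm \<Rightarrow> trm \<Rightarrow> bool" where
  "Sim t t' \<longleftrightarrow> wt t \<and> wt t' \<and> tdom t = tdom t' \<and> tcod t = tcod t' \<and> (\<exists>\<phi>. simc t t' \<phi>)"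

lemma SimI:
  assumes "wt t" "wt t'" "tdom t = tdom t'" "tcod t = tcod t'"
    "\<And>x. x < nseg t \<Longrightarrow> \<phi> x < nseg t'"
    "\<And>a b. (a, b) \<in> edges t \<Longrightarrow> (\<phi> a, \<phi> b) \<in> conn (edges t')"
    "\<And>j. j < length (tdom t) \<Longrightarrow> (\<phi> (dmap t j), dmap t' j) \<in> conn (edges t')"
    "\<And>j. j < length (tcod t) \<Longrightarrow> (\<phi> (cmap t j), cmap t' j) \<in> conn (edges t')"
    "\<And>y. y < nseg t' \<Longrightarrow> \<exists>x<nseg t. (y, \<phi> x) \<in> conn (edges t')"
  shows "Sim t t'"
  using assms unfolding Sim_def simc_def by blast

lemma Sim_trans:
  assumes "Sim t1 t2" "Sim t2 t3" shows "Sim t1 t3"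
proof -
  obtain \<phi> where p: "simc t1 t2 \<phi>" using assms(1) by (auto simp: Sim_def)
  obtain \<psi> where q: "simc t2 t3 \<psi>" using assms(2) by (auto simp: Sim_def)
  have qe: "\<forall>(a, b) \<in> edges t2. (\<psi> a, \<psi> b) \<in> conn (edges t3)" using q by (simp add: simc_def)
  have "simc t1 t3 (\<psi> \<circ> \<phi>)"
    unfolding simc_def
  proof (intro conjI allI impI ballI)
    fix x assume "x < nseg t1" then show "(\<psi> \<circ> \<phi>) x < nseg t3" using p q by (simp add: simc_def)
  next
    fix e assume "e \<in> edges t1"
    then obtain a b where e: "e = (a, b)" "(a,b) \<in> edges t1" by (cases e) auto
    then have "(\<phi> a, \<phi> b) \<in> conn (edges t2)" using p by (auto simp: simc_def)
    then have "(\<psi> (\<phi> a), \<psi> (\<phi> b)) \<in> conn (edges t3)" using conn_map[OF qe] by blast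
    then show "case e of (a, b) \<Rightarrow> ((\<psi> \<circ> \<phi>) a, (\<psi> \<circ> \<phi>) b) \<in> conn (edges t3)" using e by simp
  next
    fix j assume j: "j < length (tdom t1)"
    then have "(\<phi> (dmap t1 j), dmap t2 j) \<in> conn (edges t2)" using p by (simp add: simc_def)
    then have 1: "(\<psi> (\<phi> (dmap t1 j)), \<psi> (dmap t2 j)) \<in> conn (edges t3)" using conn_map[OF qe] by blast
    have "tdom t1 = tdom t2" using assms(1) by (simp add: Sim_def)
    then have "(\<psi> (dmap t2 j), dmap t3 j) \<in> conn (edges t3)" using q j by (simp add: simc_def)
    then show "((\<psi> \<circ> \<phi>) (dmap t1 j), dmap t3 j) \<in> conn (edges t3)" using 1 conn_trans by auto
  next
    fix j assume j: "j < length (tcod t1)"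
    then have "(\<phi> (cmap t1 j), cmap t2 j) \<in> conn (edges t2)" using p by (simp add: simc_def)
    then have 1: "(\<psi> (\<phi> (cmap t1 j)), \<psi> (cmap t2 j)) \<in> conn (edges t3)" using conn_map[OF qe] by blast
    have "tcod t1 = tcod t2" using assms(1) by (simp add: Sim_def)
    then have "(\<psi> (cmap t2 j), cmap t3 j) \<in> conn (edges t3)" using q j by (simp add: simc_def)
    then show "((\<psi> \<circ> \<phi>) (cmap t1 j), cmap t3 j) \<in> conn (edges t3)" using 1 conn_trans by auto
  next
    fix y assume "y < nseg t3"
    then obtain x' where x': "x' < nseg t2" "(y, \<psi> x') \<in> conn (edges t3)" using q by (auto simp: simc_def)
    then obtain x where x: "x < nseg t1" "(x', \<phi> x) \<in> conn (edges t2)" using p by (auto simp: simc_def)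
    then have "(\<psi> x', \<psi> (\<phi> x)) \<in> conn (edges t3)" using conn_map[OF qe] by blast
    then show "\<exists>x<nseg t1. (y, (\<psi> \<circ> \<phi>) x) \<in> conn (edges t3)" using x x' conn_trans by auto
  qed
  then show ?thesis using assms by (auto simp: Sim_def)
qed

lemma Sim_refl: "wt t \<Longrightarrow> Sim t t"
  by (rule SimI[where \<phi>=id]) (auto intro: conn_edge)

lemma Sim_knot: assumes "knot k" "Sim k k'" shows "knot k'"
proof -
  obtain \<phi> where p: "simc k k' \<phi>" using assms(2) by (auto simp: Sim_def)
  have tk: "typed k [] []" and n: "0 < nseg k" and c: "\<forall>a<nseg k. \<forall>b<nseg k. (a, b) \<in> conn (edges k)"
    using assms(1) by (auto simp: knot_def diag_eq conn_def)
  have tk': "typed k' [] []" using tk assms(2) by (simp add: Sim_def typed_iff)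
  have pe: "\<forall>(a, b) \<in> edges k. (\<phi> a, \<phi> b) \<in> conn (edges k')" using p by (simp add: simc_def)
  have n': "0 < nseg k'" using p n by (auto simp: simc_def)
  have "(a, b) \<in> conn (edges k')" if ab: "a < nseg k'" "b < nseg k'" for a b
  proof -
    obtain x where x: "x < nseg k" "(a, \<phi> x) \<in> conn (edges k')" using p ab by (auto simp: simc_def)
    obtain y where y: "y < nseg k" "(b, \<phi> y) \<in> conn (edges k')" using p ab by (auto simp: simc_def)
    have "(\<phi> x, \<phi> y) \<in> conn (edges k')" using conn_map[OF pe] c x y by blast
    then show ?thesis using x y conn_trans conn_sym by blast
  qed
  then show ?thesis using tk' n' by (auto simp: knot_def diag_eq conn_def)
qed



lemma simcD:
  assumes "simc t t' \<phi>"
  shows "\<And>x. x < nseg t \<Longrightarrow> \<phi> x < nseg t'"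
    "\<And>a b. (a, b) \<in> edges t \<Longrightarrow> (\<phi> a, \<phi> b) \<in> conn (edges t')"
    "\<And>j. j < length (tdom t) \<Longrightarrow> (\<phi> (dmap t j), dmap t' j) \<in> conn (edges t')"
    "\<And>j. j < length (tcod t) \<Longrightarrow> (\<phi> (cmap t j), cmap t' j) \<in> conn (edges t')"
    "\<And>y. y < nseg t' \<Longrightarrow> \<exists>x<nseg t. (y, \<phi> x) \<in> conn (edges t')"
  using assms unfolding simc_def by blast+

lemma conn_map_edges:
  "simc t t' \<phi> \<Longrightarrow> (a, b) \<in> conn (edges t) \<Longrightarrow> (\<phi> a, \<phi> b) \<in> conn (edges t')"
  by (rule conn_map[of "edges t"]) (auto dest: simcD)

lemma Sim_comp:
  assumes "Sim f f'" "Sim g g'" "tcod f = tdom g"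
  shows "Sim (Comp f g) (Comp f' g')"
proof -
  obtain \<phi>1 where p1: "simc f f' \<phi>1" using assms(1) by (auto simp: Sim_def)
  obtain \<phi>2 where p2: "simc g g' \<phi>2" using assms(2) by (auto simp: Sim_def)
  have wf: "wt f" "wt g" "wt f'" "wt g'" "tdom f = tdom f'" "tcod f = tcod f'" "tdom g = tdom g'" "tcod g = tcod g'"
    using assms by (auto simp: Sim_def)
  note wff = wf_diag[OF wf(1)] and wfg = wf_diag[OF wf(2)]
  define n1 where "n1 = nseg f"
  define n1' where "n1' = nseg f'"
  define \<phi> where "\<phi> x = (if x < n1 then \<phi>1 x else n1' + \<phi>2 (x - n1))" for x
  define E' where "E' = edges (Comp f' g')"
  have L1: "(a, b) \<in> conn (edges f') \<Longrightarrow> (a, b) \<in> conn E'" for a b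
    by (erule conn_mono) (auto simp: E'_def diag_sel)
  have L2: "(a, b) \<in> conn (edges g') \<Longrightarrow> (n1' + a, n1' + b) \<in> conn E'" for a b
    by (erule conn_shift_mono) (auto simp: E'_def diag_sel n1'_def)
  show ?thesis
  proof (rule SimI[where \<phi>=\<phi>])
    show "wt (Comp f g)" "wt (Comp f' g')" "tdom (Comp f g) = tdom (Comp f' g')"
      "tcod (Comp f g) = tcod (Comp f' g')" using wf assms(3) by auto
  next
    fix x assume "x < nseg (Comp f g)"
    then show "\<phi> x < nseg (Comp f' g')" using simcD(1)[OF p1, of x] simcD(1)[OF p2, of "x - n1"]
      by (auto simp: \<phi>_def diag_sel n1_def n1'_def)
  next
    fix a b assume e: "(a, b) \<in> edges (Comp f g)"
    then consider "(a, b) \<in> edges f" | a0 b0 where "(a0, b0) \<in> edges g" "a = n1 + a0" "b = n1 + b0"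
      | j where "j < length (tcod f)" "a = cmap f j" "b = n1 + dmap g j"
      by (auto simp: diag_sel shift_def n1_def)
    then show "(\<phi> a, \<phi> b) \<in> conn (edges (Comp f' g'))"
    proof cases
      case 1
      then have "a < n1" "b < n1" using wff by (auto simp: n1_def)
      then show ?thesis using L1 simcD(2)[OF p1 1] by (simp add: \<phi>_def E'_def)
    next
      case 2
      then show ?thesis using L2 simcD(2)[OF p2 2(1)] by (simp add: \<phi>_def E'_def)
    next
      case 3
      have "cmap f j < n1" using wff 3 by (auto simp: n1_def)
      then have a: "\<phi> a = \<phi>1 (cmap f j)" using 3 by (simp add: \<phi>_def)
      have b: "\<phi> b = n1' + \<phi>2 (dmap g j)" using 3 by (simp add: \<phi>_def)
      have s1: "(\<phi>1 (cmap f j), cmap f' j) \<in> conn E'" using L1 simcD(4)[OF p1 3(1)] by blast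
      have s2: "(cmap f' j, n1' + dmap g' j) \<in> conn E'"
        using 3 wf by (auto simp: E'_def diag_sel n1'_def intro!: conn_edge)
      have s3: "(n1' + dmap g' j, n1' + \<phi>2 (dmap g j)) \<in> conn E'"
        using L2 conn_sym simcD(3)[OF p2, of j] 3 assms(3) by auto
      show ?thesis using a b s1 s2 s3 conn_trans by (metis E'_def)
    qed
  next
    fix j assume j: "j < length (tdom (Comp f g))"
    then have "dmap f j < n1" using wff by (auto simp: n1_def)
    then show "(\<phi> (dmap (Comp f g) j), dmap (Comp f' g') j) \<in> conn (edges (Comp f' g'))"
      using L1 simcD(3)[OF p1, of j] j by (auto simp: \<phi>_def diag_sel E'_def)
  next
    fix j assume j: "j < length (tcod (Comp f g))"
    then show "(\<phi> (cmap (Comp f g) j), cmap (Comp f' g') j) \<in> conn (edges (Comp f' g'))"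
      using L2 simcD(4)[OF p2, of j] j by (auto simp: \<phi>_def diag_sel E'_def n1_def n1'_def)
  next
    fix y assume y: "y < nseg (Comp f' g')"
    show "\<exists>x<nseg (Comp f g). (y, \<phi> x) \<in> conn (edges (Comp f' g'))"
    proof (cases "y < n1'")
      case True
      then obtain x where "x < n1" "(y, \<phi>1 x) \<in> conn (edges f')" using simcD(5)[OF p1] by (auto simp: n1_def n1'_def)
      then show ?thesis using L1 by (auto simp: \<phi>_def diag_sel E'_def n1_def intro!: exI[of _ x])
    next
      case False
      then have "y - n1' < nseg g'" using y by (auto simp: diag_sel n1'_def)
      then obtain x where x: "x < nseg g" "(y - n1', \<phi>2 x) \<in> conn (edges g')" using simcD(5)[OF p2] by blast
      have "(n1' + (y - n1'), n1' + \<phi>2 x) \<in> conn E'" using L2 x by blast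
      then show ?thesis using False x
        by (auto simp: \<phi>_def diag_sel E'_def n1_def intro!: exI[of _ "n1 + x"])
    qed
  qed
qed

lemma Sim_tens:
  assumes "Sim f f'" "Sim g g'"
  shows "Sim (Tens f g) (Tens f' g')"
proof -
  obtain \<phi>1 where p1: "simc f f' \<phi>1" using assms(1) by (auto simp: Sim_def)
  obtain \<phi>2 where p2: "simc g g' \<phi>2" using assms(2) by (auto simp: Sim_def)
  have wf: "wt f" "wt g" "wt f'" "wt g'" "tdom f = tdom f'" "tcod f = tcod f'" "tdom g = tdom g'" "tcod g = tcod g'"
    using assms by (auto simp: Sim_def)
  note wff = wf_diag[OF wf(1)] and wfg = wf_diag[OF wf(2)]
  define n1 where "n1 = nseg f"
  define n1' where "n1' = nseg f'"
  define \<phi> where "\<phi> x = (if x < n1 then \<phi>1 x else n1' + \<phi>2 (x - n1))" for x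
  define E' where "E' = edges (Tens f' g')"
  have L1: "(a, b) \<in> conn (edges f') \<Longrightarrow> (a, b) \<in> conn E'" for a b
    by (erule conn_mono) (auto simp: E'_def diag_sel)
  have L2: "(a, b) \<in> conn (edges g') \<Longrightarrow> (n1' + a, n1' + b) \<in> conn E'" for a b
    by (erule conn_shift_mono) (auto simp: E'_def diag_sel n1'_def)
  show ?thesis
  proof (rule SimI[where \<phi>=\<phi>])
    show "wt (Tens f g)" "wt (Tens f' g')" "tdom (Tens f g) = tdom (Tens f' g')"
      "tcod (Tens f g) = tcod (Tens f' g')" using wf by auto
  next
    fix x assume "x < nseg (Tens f g)"
    then show "\<phi> x < nseg (Tens f' g')" using simcD(1)[OF p1, of x] simcD(1)[OF p2, of "x - n1"]
      by (auto simp: \<phi>_def diag_sel n1_def n1'_def)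
  next
    fix a b assume e: "(a, b) \<in> edges (Tens f g)"
    then consider "(a, b) \<in> edges f" | a0 b0 where "(a0, b0) \<in> edges g" "a = n1 + a0" "b = n1 + b0"
      by (auto simp: diag_sel shift_def n1_def)
    then show "(\<phi> a, \<phi> b) \<in> conn (edges (Tens f' g'))"
    proof cases
      case 1
      then have "a < n1" "b < n1" using wff by (auto simp: n1_def)
      then show ?thesis using L1 simcD(2)[OF p1 1] by (simp add: \<phi>_def E'_def)
    next
      case 2
      then show ?thesis using L2 simcD(2)[OF p2 2(1)] by (simp add: \<phi>_def E'_def)
    qed
  next
    fix j assume j: "j < length (tdom (Tens f g))"
    show "(\<phi> (dmap (Tens f g) j), dmap (Tens f' g') j) \<in> conn (edges (Tens f' g'))"
    proof (cases "j < length (tdom f)")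
      case True
      then have "dmap f j < n1" using wff by (auto simp: n1_def)
      then show ?thesis using L1 simcD(3)[OF p1, of j] True wf by (auto simp: \<phi>_def diag_sel E'_def)
    next
      case False
      then show ?thesis using L2 simcD(3)[OF p2, of "j - length (tdom f)"] j wf
        by (auto simp: \<phi>_def diag_sel E'_def n1_def n1'_def)
    qed
  next
    fix j assume j: "j < length (tcod (Tens f g))"
    show "(\<phi> (cmap (Tens f g) j), cmap (Tens f' g') j) \<in> conn (edges (Tens f' g'))"
    proof (cases "j < length (tcod f)")
      case True
      then have "cmap f j < n1" using wff by (auto simp: n1_def)
      then show ?thesis using L1 simcD(4)[OF p1, of j] True wf by (auto simp: \<phi>_def diag_sel E'_def)
    next
      case False
      then show ?thesis using L2 simcD(4)[OF p2, of "j - length (tcod f)"] j wf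
        by (auto simp: \<phi>_def diag_sel E'_def n1_def n1'_def)
    qed
  next
    fix y assume y: "y < nseg (Tens f' g')"
    show "\<exists>x<nseg (Tens f g). (y, \<phi> x) \<in> conn (edges (Tens f' g'))"
    proof (cases "y < n1'")
      case True
      then obtain x where "x < n1" "(y, \<phi>1 x) \<in> conn (edges f')" using simcD(5)[OF p1] by (auto simp: n1_def n1'_def)
      then show ?thesis using L1 by (auto simp: \<phi>_def diag_sel E'_def n1_def intro!: exI[of _ x])
    next
      case False
      then have "y - n1' < nseg g'" using y by (auto simp: diag_sel n1'_def)
      then obtain x where x: "x < nseg g" "(y - n1', \<phi>2 x) \<in> conn (edges g')" using simcD(5)[OF p2] by blast
      have "(n1' + (y - n1'), n1' + \<phi>2 x) \<in> conn E'" using L2 x by blast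
      then show ?thesis using False x
        by (auto simp: \<phi>_def diag_sel E'_def n1_def intro!: exI[of _ "n1 + x"])
    qed
  qed
qed



lemma shift_empty[simp]: "shift k {} = {}" by (simp add: shift_def)
lemma shift_0[simp]: "shift 0 E = E" by (auto simp: shift_def)
lemma shift_Un[simp]: "shift k (A \<union> B) = shift k A \<union> shift k B" by (auto simp: shift_def)
lemma shift_shift[simp]: "shift k (shift m E) = shift (k + m) E"
  by (auto simp: shift_def add.assoc)
lemma shift_glue[simp]: "shift k {(p j, q j) | j. P j} = {(k + p j, k + q j) | j. P j}"
  by (auto simp: shift_def)

lemma Sim_eqdiag:
  assumes "wt t" "wt t'" "tdom t = tdom t'" "tcod t = tcod t'" "nseg t = nseg t'" "edges t = edges t'"
    "\<And>j. j < length (tdom t) \<Longrightarrow> dmap t j = dmap t' j"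
    "\<And>j. j < length (tcod t) \<Longrightarrow> cmap t j = cmap t' j"
  shows "Sim t t'" "Sim t' t"
  by (rule SimI[where \<phi>=id]; use assms in \<open>auto intro: conn_edge\<close>)+

lemma Sim_assoc:
  assumes "wt f" "wt g" "wt h" "tcod f = tdom g" "tcod g = tdom h"
  shows "Sim (Comp (Comp f g) h) (Comp f (Comp g h))" "Sim (Comp f (Comp g h)) (Comp (Comp f g) h)"
  by (rule Sim_eqdiag; use assms in \<open>auto simp: diag_sel add.assoc\<close>)+

lemma Sim_tens_unit_left:
  assumes "wt f"
  shows "Sim (Tens (Id []) f) f" "Sim f (Tens (Id []) f)"
  by (rule Sim_eqdiag; use assms in \<open>auto simp: diag_sel\<close>)+

lemma Sim_tens_unit_right:
  assumes "wt f"
  shows "Sim (Tens f (Id [])) f" "Sim f (Tens f (Id []))"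
  by (rule Sim_eqdiag; use assms in \<open>auto simp: diag_sel\<close>)+

lemma Sim_tens_id:
  shows "Sim (Tens (Id A) (Id B)) (Id (A @ B))" "Sim (Id (A @ B)) (Tens (Id A) (Id B))"
  by (rule Sim_eqdiag; auto simp: diag_sel)+

lemma Sim_tens_assoc:
  assumes "wt f" "wt g" "wt h"
  shows "Sim (Tens (Tens f g) h) (Tens f (Tens g h))" "Sim (Tens f (Tens g h)) (Tens (Tens f g) h)"
  by (rule Sim_eqdiag; use assms in \<open>auto simp: diag_sel add.assoc\<close>)+

lemma Sim_Br_nil:
  shows "Sim (Br Y []) (Id Y)" "Sim (Id Y) (Br Y [])" "Sim (BrInv Y []) (Id Y)" "Sim (Id Y) (BrInv Y [])"
  by (rule Sim_eqdiag; auto simp: diag_sel)+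



lemma edge_glue: "j < length (tcod f) \<Longrightarrow> (cmap f j, nseg f + dmap g j) \<in> edges (Comp f g)"
  by (auto simp: diag_sel)
lemma edge_comp1: "(a, b) \<in> edges f \<Longrightarrow> (a, b) \<in> edges (Comp f g)"
  by (auto simp: diag_sel)
lemma edge_comp2: "(a, b) \<in> edges g \<Longrightarrow> (nseg f + a, nseg f + b) \<in> edges (Comp f g)"
  by (auto simp: diag_sel shift_def)
lemma edge_tens1: "(a, b) \<in> edges f \<Longrightarrow> (a, b) \<in> edges (Tens f g)"
  by (auto simp: diag_sel)
lemma edge_tens2: "(a, b) \<in> edges g \<Longrightarrow> (nseg f + a, nseg f + b) \<in> edges (Tens f g)"
  by (auto simp: diag_sel shift_def)

lemma Sim_id_left:
  assumes "wt f" "A = tdom f"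
  shows "Sim (Comp (Id A) f) f" "Sim f (Comp (Id A) f)"
proof -
  note wff = wf_diag[OF assms(1)]
  define a where "a = length A"
  show "Sim (Comp (Id A) f) f"
  proof (rule SimI[where \<phi>="\<lambda>x. if x < a then dmap f x else x - a"])
    fix x assume "x < nseg (Comp (Id A) f)" then show "(if x < a then dmap f x else x - a) < nseg f"
      using wff assms by (auto simp: diag_sel a_def)
  next
    fix p q assume "(p, q) \<in> edges (Comp (Id A) f)"
    then show "((if p < a then dmap f p else p - a), (if q < a then dmap f q else q - a)) \<in> conn (edges f)"
      by (auto simp: diag_sel a_def shift_def intro: conn_edge)
  next
    fix y assume "y < nseg f" then show "\<exists>x<nseg (Comp (Id A) f). (y, if x < a then dmap f x else x - a) \<in> conn (edges f)"
      by (auto simp: diag_sel a_def intro!: exI[of _ "a + y"])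
  qed (use assms in \<open>auto simp: diag_sel a_def\<close>)
  show "Sim f (Comp (Id A) f)"
  proof (rule SimI[where \<phi>="\<lambda>x. a + x"])
    fix p q assume "(p, q) \<in> edges f"
    then show "(a + p, a + q) \<in> conn (edges (Comp (Id A) f))"
      by (auto simp: diag_sel a_def shift_def intro!: conn_edge)
  next
    fix j assume "j < length (tdom f)"
    then show "(a + dmap f j, dmap (Comp (Id A) f) j) \<in> conn (edges (Comp (Id A) f))"
      using assms by (auto simp: diag_sel a_def intro!: conn_edge')
  next
    fix y assume y: "y < nseg (Comp (Id A) f)"
    show "\<exists>x<nseg f. (y, a + x) \<in> conn (edges (Comp (Id A) f))"
    proof (cases "y < a")
      case True
      have "(y, a + dmap f y) \<in> edges (Comp (Id A) f)"
        using edge_glue[of y "Id A" f] True by (simp add: diag_sel a_def)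
      moreover have "dmap f y < nseg f" using wff assms True by (auto simp: a_def)
      ultimately show ?thesis using conn_edge by blast
    next
      case False
      then show ?thesis using y by (auto simp: diag_sel a_def intro!: exI[of _ "y - a"])
    qed
  qed (use assms in \<open>auto simp: diag_sel a_def\<close>)
qed

lemma Sim_id_right:
  assumes "wt f" "B = tcod f"
  shows "Sim (Comp f (Id B)) f" "Sim f (Comp f (Id B))"
proof -
  note wff = wf_diag[OF assms(1)]
  define n where "n = nseg f"
  show "Sim (Comp f (Id B)) f"
  proof (rule SimI[where \<phi>="\<lambda>x. if x < n then x else cmap f (x - n)"])
    fix x assume "x < nseg (Comp f (Id B))" then show "(if x < n then x else cmap f (x - n)) < nseg f"
      using wff assms by (auto simp: diag_sel n_def)
  next
    fix p q assume "(p, q) \<in> edges (Comp f (Id B))"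
    then show "((if p < n then p else cmap f (p - n)), (if q < n then q else cmap f (q - n))) \<in> conn (edges f)"
      using wff assms by (auto simp: diag_sel n_def shift_def intro: conn_edge)
  next
    fix j assume "j < length (tdom (Comp f (Id B)))"
    then show "((if dmap (Comp f (Id B)) j < n then dmap (Comp f (Id B)) j else cmap f (dmap (Comp f (Id B)) j - n)), dmap f j) \<in> conn (edges f)"
      using wff by (auto simp: diag_sel n_def)
  next
    fix y assume "y < nseg f" then show "\<exists>x<nseg (Comp f (Id B)). (y, if x < n then x else cmap f (x - n)) \<in> conn (edges f)"
      by (auto simp: diag_sel n_def intro!: exI[of _ y])
  qed (use assms in \<open>auto simp: diag_sel n_def\<close>)
  show "Sim f (Comp f (Id B))"
  proof (rule SimI[where \<phi>="\<lambda>x. x"])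
    fix p q assume "(p, q) \<in> edges f"
    then show "(p, q) \<in> conn (edges (Comp f (Id B)))"
      by (auto simp: diag_sel intro!: conn_edge)
  next
    fix j assume "j < length (tcod f)"
    then show "(cmap f j, cmap (Comp f (Id B)) j) \<in> conn (edges (Comp f (Id B)))"
      using assms by (auto simp: diag_sel intro!: conn_edge)
  next
    fix y assume y: "y < nseg (Comp f (Id B))"
    show "\<exists>x<nseg f. (y, x) \<in> conn (edges (Comp f (Id B)))"
    proof (cases "y < n")
      case True
      then show ?thesis by (auto simp: n_def intro!: exI[of _ y])
    next
      case False
      have "y - n < length (tcod f)" using False y assms by (simp add: diag_sel n_def)
      then have "(cmap f (y - n), n + dmap (Id B) (y - n)) \<in> edges (Comp f (Id B))"
        using edge_glue[of "y - n" f "Id B"] by (simp add: n_def)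
      then have "(cmap f (y - n), y) \<in> edges (Comp f (Id B))" using False by (simp add: diag_sel)
      moreover have "cmap f (y - n) < nseg f" using wff \<open>y - n < length (tcod f)\<close> by auto
      ultimately show ?thesis using conn_edge' by blast
    qed
  qed (use assms in \<open>auto simp: diag_sel\<close>)
qed



lemma SimI_exact:
  assumes "wt t" "wt t'" "tdom t = tdom t'" "tcod t = tcod t'"
    "\<And>x. x < nseg t \<Longrightarrow> \<phi> x < nseg t'"
    "\<And>a b. (a, b) \<in> edges t \<Longrightarrow> (\<phi> a, \<phi> b) \<in> edges t'"
    "\<And>j. j < length (tdom t) \<Longrightarrow> \<phi> (dmap t j) = dmap t' j"
    "\<And>j. j < length (tcod t) \<Longrightarrow> \<phi> (cmap t j) = cmap t' j"
    "\<And>y. y < nseg t' \<Longrightarrow> \<exists>x<nseg t. \<phi> x = y"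
  shows "Sim t t'"
  by (rule SimI[where \<phi>=\<phi>]; use assms in \<open>force intro: conn_edge\<close>)

lemma Sim_interchange:
  assumes w: "wt f" "wt g" "wt h" "wt k" "tcod f = tdom g" "tcod h = tdom k"
  shows "Sim (Tens (Comp f g) (Comp h k)) (Comp (Tens f h) (Tens g k))"
    "Sim (Comp (Tens f h) (Tens g k)) (Tens (Comp f g) (Comp h k))"
proof -
  define nf where "nf = nseg f"
  define ng where "ng = nseg g"
  define nh where "nh = nseg h"
  define nk where "nk = nseg k"
  note wf = wf_diag[OF w(1)] wf_diag[OF w(2)] wf_diag[OF w(3)] wf_diag[OF w(4)]
  define \<phi> where "\<phi> x = (if x < nf then x else if x < nf + ng then x + nh else if x < nf + ng + nh then x - ng else x)" for x
  define \<psi> where "\<psi> x = (if x < nf then x else if x < nf + nh then x + ng else if x < nf + nh + ng then x - nh else x)" for x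
  let ?L = "Tens (Comp f g) (Comp h k)"
  let ?R = "Comp (Tens f h) (Tens g k)"
  have ER: "(a, b) \<in> edges ?R \<longleftrightarrow>
     (a, b) \<in> edges f \<or> (\<exists>a0 b0. (a0, b0) \<in> edges h \<and> a = nf + a0 \<and> b = nf + b0)
     \<or> (\<exists>a0 b0. (a0, b0) \<in> edges g \<and> a = nf + nh + a0 \<and> b = nf + nh + b0)
     \<or> (\<exists>a0 b0. (a0, b0) \<in> edges k \<and> a = nf + nh + ng + a0 \<and> b = nf + nh + ng + b0)
     \<or> (\<exists>j. j < length (tcod f) \<and> a = cmap f j \<and> b = nf + nh + dmap g j)
     \<or> (\<exists>j. j < length (tcod h) \<and> a = nf + cmap h j \<and> b = nf + nh + ng + dmap k j)" for a b
  proof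
    assume "(a, b) \<in> edges ?R"
    then consider "(a, b) \<in> edges f" | "\<exists>a0 b0. (a0, b0) \<in> edges h \<and> a = nf + a0 \<and> b = nf + b0"
      | "\<exists>a0 b0. (a0, b0) \<in> edges g \<and> a = nf + nh + a0 \<and> b = nf + nh + b0"
      | "\<exists>a0 b0. (a0, b0) \<in> edges k \<and> a = nf + nh + ng + a0 \<and> b = nf + nh + ng + b0"
      | j where "j < length (tcod f) + length (tcod h)" "a = cmap (Tens f h) j" "b = nf + nh + dmap (Tens g k) j"
      by (auto simp: diag_sel shift_def nf_def nh_def ng_def add.assoc)
    then show "(a, b) \<in> edges f \<or> (\<exists>a0 b0. (a0, b0) \<in> edges h \<and> a = nf + a0 \<and> b = nf + b0)
     \<or> (\<exists>a0 b0. (a0, b0) \<in> edges g \<and> a = nf + nh + a0 \<and> b = nf + nh + b0)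
     \<or> (\<exists>a0 b0. (a0, b0) \<in> edges k \<and> a = nf + nh + ng + a0 \<and> b = nf + nh + ng + b0)
     \<or> (\<exists>j. j < length (tcod f) \<and> a = cmap f j \<and> b = nf + nh + dmap g j)
     \<or> (\<exists>j. j < length (tcod h) \<and> a = nf + cmap h j \<and> b = nf + nh + ng + dmap k j)"
    proof cases
      case 5
      show ?thesis
      proof (cases "j < length (tcod f)")
        case True then show ?thesis using 5 w by (auto simp: diag_sel nf_def)
      next
        case False
        then have "j - length (tcod f) < length (tcod h)" "a = nf + cmap h (j - length (tcod f))"
          "b = nf + nh + ng + dmap k (j - length (tcod f))"
          using 5 w by (auto simp: diag_sel nf_def ng_def)
        then show ?thesis by blast
      qed
    qed blast+
  next
    assume "(a, b) \<in> edges f \<or> (\<exists>a0 b0. (a0, b0) \<in> edges h \<and> a = nf + a0 \<and> b = nf + b0)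
     \<or> (\<exists>a0 b0. (a0, b0) \<in> edges g \<and> a = nf + nh + a0 \<and> b = nf + nh + b0)
     \<or> (\<exists>a0 b0. (a0, b0) \<in> edges k \<and> a = nf + nh + ng + a0 \<and> b = nf + nh + ng + b0)
     \<or> (\<exists>j. j < length (tcod f) \<and> a = cmap f j \<and> b = nf + nh + dmap g j)
     \<or> (\<exists>j. j < length (tcod h) \<and> a = nf + cmap h j \<and> b = nf + nh + ng + dmap k j)"
    then consider "(a, b) \<in> edges f" | "\<exists>a0 b0. (a0, b0) \<in> edges h \<and> a = nf + a0 \<and> b = nf + b0"
      | "\<exists>a0 b0. (a0, b0) \<in> edges g \<and> a = nf + nh + a0 \<and> b = nf + nh + b0"
      | "\<exists>a0 b0. (a0, b0) \<in> edges k \<and> a = nf + nh + ng + a0 \<and> b = nf + nh + ng + b0"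
      | j where "j < length (tcod f)" "a = cmap f j" "b = nf + nh + dmap g j"
      | j where "j < length (tcod h)" "a = nf + cmap h j" "b = nf + nh + ng + dmap k j" by blast
    then show "(a, b) \<in> edges ?R"
    proof cases
      case 1 then show ?thesis by (auto simp: diag_sel)
    next
      case 2 then show ?thesis by (auto simp: diag_sel shift_def nf_def)
    next
      case 3 then show ?thesis by (auto simp: diag_sel shift_def nf_def nh_def)
    next
      case 4 then show ?thesis by (auto simp: diag_sel shift_def nf_def nh_def ng_def add.assoc)
    next
      case 5
      have "(cmap (Tens f h) j, nseg (Tens f h) + dmap (Tens g k) j) \<in> edges ?R"
        by (rule edge_glue) (use 5 in auto)
      then show ?thesis using 5 w by (simp add: diag_sel nf_def nh_def)
    next
      case 6
      have "(cmap (Tens f h) (length (tcod f) + j), nseg (Tens f h) + dmap (Tens g k) (length (tcod f) + j)) \<in> edges ?R"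
        by (rule edge_glue) (use 6 in auto)
      then show ?thesis using 6 w by (simp add: diag_sel nf_def nh_def ng_def add.assoc)
    qed
  qed
  have EL: "(a, b) \<in> edges ?L \<longleftrightarrow>
     (a, b) \<in> edges f \<or> (\<exists>a0 b0. (a0, b0) \<in> edges h \<and> a = nf + ng + a0 \<and> b = nf + ng + b0)
     \<or> (\<exists>a0 b0. (a0, b0) \<in> edges g \<and> a = nf + a0 \<and> b = nf + b0)
     \<or> (\<exists>a0 b0. (a0, b0) \<in> edges k \<and> a = nf + ng + nh + a0 \<and> b = nf + ng + nh + b0)
     \<or> (\<exists>j. j < length (tcod f) \<and> a = cmap f j \<and> b = nf + dmap g j)
     \<or> (\<exists>j. j < length (tcod h) \<and> a = nf + ng + cmap h j \<and> b = nf + ng + nh + dmap k j)" for a b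
    by (auto simp: diag_sel shift_def nf_def ng_def nh_def add.assoc)
  note sz = nf_def[symmetric] ng_def[symmetric] nh_def[symmetric] nk_def[symmetric]
  have bf: "\<And>a b. (a, b) \<in> edges f \<Longrightarrow> a < nf \<and> b < nf" using wf_diag[OF w(1)] by (auto simp: sz)
  have bg: "\<And>a b. (a, b) \<in> edges g \<Longrightarrow> a < ng \<and> b < ng" using wf_diag[OF w(2)] by (auto simp: sz)
  have bh: "\<And>a b. (a, b) \<in> edges h \<Longrightarrow> a < nh \<and> b < nh" using wf_diag[OF w(3)] by (auto simp: sz)
  have cf: "\<And>j. j < length (tcod f) \<Longrightarrow> cmap f j < nf" using wf_diag[OF w(1)] by (auto simp: sz)
  have dg: "\<And>j. j < length (tcod f) \<Longrightarrow> dmap g j < ng" using wf_diag[OF w(2)] w(5) by (auto simp: sz)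
  have ch: "\<And>j. j < length (tcod h) \<Longrightarrow> cmap h j < nh" using wf_diag[OF w(3)] by (auto simp: sz)
  have \<phi>1: "\<And>x. x < nf \<Longrightarrow> \<phi> x = x" by (simp add: \<phi>_def)
  have \<phi>2: "\<And>x. x < ng \<Longrightarrow> \<phi> (nf + x) = nf + nh + x" by (simp add: \<phi>_def)
  have \<phi>3: "\<And>x. x < nh \<Longrightarrow> \<phi> (nf + ng + x) = nf + x" by (simp add: \<phi>_def)
  have \<phi>4: "\<And>x. \<phi> (nf + ng + nh + x) = nf + nh + ng + x" by (simp add: \<phi>_def)
  have \<psi>1: "\<And>x. x < nf \<Longrightarrow> \<psi> x = x" by (simp add: \<psi>_def)
  have \<psi>2: "\<And>x. x < nh \<Longrightarrow> \<psi> (nf + x) = nf + ng + x" by (simp add: \<psi>_def)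
  have \<psi>3: "\<And>x. x < ng \<Longrightarrow> \<psi> (nf + nh + x) = nf + x" by (simp add: \<psi>_def)
  have \<psi>4: "\<And>x. \<psi> (nf + nh + ng + x) = nf + ng + nh + x" by (simp add: \<psi>_def)
  show "Sim ?L ?R"
  proof (rule SimI_exact[where \<phi>=\<phi>])
    fix a b assume "(a, b) \<in> edges ?L"
    then consider "(a, b) \<in> edges f" | a0 b0 where "(a0, b0) \<in> edges h" "a = nf + ng + a0" "b = nf + ng + b0"
     | a0 b0 where "(a0, b0) \<in> edges g" "a = nf + a0" "b = nf + b0"
     | a0 b0 where "(a0, b0) \<in> edges k" "a = nf + ng + nh + a0" "b = nf + ng + nh + b0"
     | j where "j < length (tcod f)" "a = cmap f j" "b = nf + dmap g j"
     | j where "j < length (tcod h)" "a = nf + ng + cmap h j" "b = nf + ng + nh + dmap k j"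
      unfolding EL by blast
    then show "(\<phi> a, \<phi> b) \<in> edges ?R"
    proof cases
      case 1 then show ?thesis using bf[OF 1] \<phi>1 ER by (simp; blast?)
    next
      case 2 then show ?thesis using bh[OF 2(1)] \<phi>3 ER by (simp; blast?)
    next
      case 3 then show ?thesis using bg[OF 3(1)] \<phi>2 ER by (simp; blast?)
    next
      case 4 then show ?thesis using \<phi>4 ER by (simp; blast?)
    next
      case 5 then show ?thesis using cf[OF 5(1)] dg[OF 5(1)] \<phi>1 \<phi>2 ER by (simp; blast?)
    next
      case 6 then show ?thesis using ch[OF 6(1)] \<phi>3 \<phi>4 ER by (simp; blast?)
    qed
  next
    fix y assume "y < nseg ?R"
    then show "\<exists>x<nseg ?L. \<phi> x = y"
      by (intro exI[of _ "\<psi> y"]) (auto simp: \<phi>_def \<psi>_def diag_sel sz)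
  qed (use w wf in \<open>auto simp: \<phi>_def diag_sel sz\<close>)
  show "Sim ?R ?L"
  proof (rule SimI_exact[where \<phi>=\<psi>])
    fix a b assume "(a, b) \<in> edges ?R"
    then consider "(a, b) \<in> edges f" | a0 b0 where "(a0, b0) \<in> edges h" "a = nf + a0" "b = nf + b0"
     | a0 b0 where "(a0, b0) \<in> edges g" "a = nf + nh + a0" "b = nf + nh + b0"
     | a0 b0 where "(a0, b0) \<in> edges k" "a = nf + nh + ng + a0" "b = nf + nh + ng + b0"
     | j where "j < length (tcod f)" "a = cmap f j" "b = nf + nh + dmap g j"
     | j where "j < length (tcod h)" "a = nf + cmap h j" "b = nf + nh + ng + dmap k j"
      unfolding ER by blast
    then show "(\<psi> a, \<psi> b) \<in> edges ?L"
    proof cases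
      case 1 then show ?thesis using bf[OF 1] \<psi>1 EL by (simp; blast?)
    next
      case 2 then show ?thesis using bh[OF 2(1)] \<psi>2 EL by (simp; blast?)
    next
      case 3 then show ?thesis using bg[OF 3(1)] \<psi>3 EL by (simp; blast?)
    next
      case 4 then show ?thesis using \<psi>4 EL by (simp; blast?)
    next
      case 5 then show ?thesis using cf[OF 5(1)] dg[OF 5(1)] \<psi>1 \<psi>3 EL by (simp; blast?)
    next
      case 6 then show ?thesis using ch[OF 6(1)] \<psi>2 \<psi>4 EL by (simp; blast?)
    qed
  next
    fix y assume "y < nseg ?L"
    then show "\<exists>x<nseg ?R. \<psi> x = y"
      by (intro exI[of _ "\<phi> y"]) (auto simp: \<phi>_def \<psi>_def diag_sel sz)
  qed (use w wf in \<open>auto simp: \<psi>_def diag_sel sz\<close>)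
qed



lemma Sim_braid:
  assumes w: "wt C" "tdom C = []" "X = tcod C"
  shows "Sim (Comp (Tens (Id Y) C) (Br Y X)) (Tens C (Id Y))"
    "Sim (Tens C (Id Y)) (Comp (Tens (Id Y) C) (Br Y X))"
proof -
  define y where "y = length Y"
  define c where "c = nseg C"
  define x where "x = length X"
  note wC = wf_diag[OF w(1)]
  have bC: "\<And>a b. (a, b) \<in> edges C \<Longrightarrow> a < c \<and> b < c" using wC by (auto simp: c_def)
  have cC: "\<And>j. j < x \<Longrightarrow> cmap C j < c" using wC w by (auto simp: c_def x_def)
  let ?P = "Tens (Id Y) C"
  let ?L = "Comp ?P (Br Y X)"
  let ?R = "Tens C (Id Y)"
  have Pc: "cmap ?P j = (if j < y then j else y + cmap C (j - y))" for j by (simp add: diag_sel y_def)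
  have glue: "j < y + x \<Longrightarrow> (cmap ?P j, y + c + j) \<in> edges ?L" for j
    using edge_glue[of j ?P "Br Y X"] w by (simp add: diag_sel y_def c_def x_def)
  have EL0: "edges ?L = shift y (edges C) \<union> {(cmap ?P j, y + c + j) | j. j < y + x}"
  proof -
    have "edges ?L = edges ?P \<union> shift (nseg ?P) (edges (Br Y X)) \<union> {(cmap ?P j, nseg ?P + dmap (Br Y X) j) | j. j < length (tcod ?P)}"
      by (rule diag_Comp_sel(4))
    moreover have "edges ?P = shift y (edges C)" by (simp add: diag_sel y_def)
    moreover have "nseg ?P = y + c" by (simp add: diag_sel y_def c_def)
    moreover have "dmap (Br Y X) = (\<lambda>j. j)" "edges (Br Y X) = {}" by (simp_all add: diag_sel)
    moreover have "length (tcod ?P) = y + x" using w by (simp add: y_def x_def)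
    ultimately show ?thesis by simp
  qed
  have EL: "(a, b) \<in> edges ?L \<longleftrightarrow> (\<exists>a0 b0. (a0, b0) \<in> edges C \<and> a = y + a0 \<and> b = y + b0)
      \<or> (\<exists>j. j < y + x \<and> a = cmap ?P j \<and> b = y + c + j)" for a b
    unfolding EL0 shift_def by blast
  have ER: "edges ?R = edges C" by (simp add: diag_sel)
  show "Sim ?L ?R"
  proof (rule SimI[where \<phi>="\<lambda>s. if s < y then c + s else if s < y + c then s - y
         else (if s - (y + c) < y then c + (s - (y + c)) else cmap C (s - (y + c) - y))"])
    fix s assume s: "s < nseg ?L"
    have "cmap C (s - (y + c) - y) < c" if a1: "\<not> s < y + c" "\<not> s - (y + c) < y"
    proof -
      have "s - (y + c) - y < x" using s w a1 by (simp add: diag_sel y_def c_def x_def)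
      then show ?thesis by (rule cC)
    qed
    then show "(if s < y then c + s else if s < y + c then s - y
         else (if s - (y + c) < y then c + (s - (y + c)) else cmap C (s - (y + c) - y))) < nseg ?R"
      using s w by (auto simp: diag_sel y_def c_def x_def)
  next
    fix a b assume "(a, b) \<in> edges ?L"
    then consider a0 b0 where "(a0, b0) \<in> edges C" "a = y + a0" "b = y + b0"
      | j where "j < y + x" "a = cmap ?P j" "b = y + c + j" unfolding EL by blast
    then show "((if a < y then c + a else if a < y + c then a - y
         else (if a - (y + c) < y then c + (a - (y + c)) else cmap C (a - (y + c) - y))),
         (if b < y then c + b else if b < y + c then b - y
         else (if b - (y + c) < y then c + (b - (y + c)) else cmap C (b - (y + c) - y)))) \<in> conn (edges ?R)"
    proof cases
      case 1 then show ?thesis using bC[OF 1(1)] ER by (auto intro: conn_edge)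
    next
      case 2 then show ?thesis using cC[of "j - y"] unfolding Pc by auto
    qed
  next
    fix j assume "j < length (tdom ?L)"
    then show "((if dmap ?L j < y then c + dmap ?L j else if dmap ?L j < y + c then dmap ?L j - y
         else (if dmap ?L j - (y + c) < y then c + (dmap ?L j - (y + c)) else cmap C (dmap ?L j - (y + c) - y))),
         dmap ?R j) \<in> conn (edges ?R)"
      using w by (simp add: diag_sel y_def c_def)
  next
    fix j assume j: "j < length (tcod ?L)"
    show "((if cmap ?L j < y then c + cmap ?L j else if cmap ?L j < y + c then cmap ?L j - y
         else (if cmap ?L j - (y + c) < y then c + (cmap ?L j - (y + c)) else cmap C (cmap ?L j - (y + c) - y))),
         cmap ?R j) \<in> conn (edges ?R)"
      using j w by (auto simp: diag_sel y_def c_def x_def)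
  next
    fix s assume s: "s < nseg ?R"
    show "\<exists>t<nseg ?L. (s, (if t < y then c + t else if t < y + c then t - y
         else (if t - (y + c) < y then c + (t - (y + c)) else cmap C (t - (y + c) - y)))) \<in> conn (edges ?R)"
    proof (cases "s < c")
      case True then show ?thesis by (intro exI[of _ "y + s"]) (auto simp: diag_sel y_def c_def)
    next
      case False then show ?thesis using s by (intro exI[of _ "s - c"]) (auto simp: diag_sel y_def c_def)
    qed
  qed (use w in auto)
  show "Sim ?R ?L"
  proof (rule SimI[where \<phi>="\<lambda>s. if s < c then y + s else s - c"])
    fix s assume "s < nseg ?R"
    then show "(if s < c then y + s else s - c) < nseg ?L"
      by (auto simp: diag_sel y_def c_def)
  next
    fix a b assume "(a, b) \<in> edges ?R"
    then have "(a, b) \<in> edges C" using ER by simp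
    then show "((if a < c then y + a else a - c), (if b < c then y + b else b - c)) \<in> conn (edges ?L)"
      using bC EL by (auto intro!: conn_edge)
  next
    fix j assume "j < length (tdom ?R)"
    then show "((if dmap ?R j < c then y + dmap ?R j else dmap ?R j - c), dmap ?L j) \<in> conn (edges ?L)"
      using w by (simp add: diag_sel y_def c_def)
  next
    fix j assume j: "j < length (tcod ?R)"
    show "((if cmap ?R j < c then y + cmap ?R j else cmap ?R j - c), cmap ?L j) \<in> conn (edges ?L)"
    proof (cases "j < x")
      case True
      have e: "(y + cmap C j, y + c + (y + j)) \<in> edges ?L" using glue[of "y + j"] True by (simp add: Pc x_def)
      have 1: "cmap ?L j = y + c + (y + j)" using True w by (simp add: diag_sel y_def c_def x_def)
      have 2: "cmap ?R j = cmap C j" using True w by (simp add: diag_sel x_def)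
      show ?thesis unfolding 1 2 using cC[OF True] conn_edge[OF e] by simp
    next
      case False
      then have jx: "j - x < y" using j w by (simp add: y_def x_def)
      have e: "(j - x, y + c + (j - x)) \<in> edges ?L" using glue[of "j - x"] jx by (simp add: Pc)
      have 1: "cmap ?L j = y + c + (j - x)" using False w by (simp add: diag_sel y_def c_def x_def)
      have 2: "cmap ?R j = c + (j - x)" using False w by (simp add: diag_sel x_def c_def)
      show ?thesis unfolding 1 2 using conn_edge[OF e] by simp
    qed
  next
    fix s assume s: "s < nseg ?L"
    show "\<exists>t<nseg ?R. (s, if t < c then y + t else t - c) \<in> conn (edges ?L)"
    proof (cases "s < y + c")
      case True
      show ?thesis
      proof (cases "s < y")
        case True then show ?thesis by (intro exI[of _ "c + s"]) (auto simp: diag_sel y_def c_def)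
      next
        case False then show ?thesis using \<open>s < y + c\<close> by (intro exI[of _ "s - y"]) (auto simp: diag_sel y_def c_def)
      qed
    next
      case False
      define j where "j = s - (y + c)"
      have j: "j < y + x" using s False w by (simp add: diag_sel y_def c_def x_def j_def)
      have e: "(s, cmap ?P j) \<in> conn (edges ?L)" using glue[OF j] False by (auto simp: j_def intro: conn_edge')
      show ?thesis
      proof (cases "j < y")
        case True then show ?thesis using e unfolding Pc by (intro exI[of _ "c + j"]) (auto simp: diag_sel y_def c_def)
      next
        case False
        then have "j - y < x" using j by simp
        then show ?thesis using e cC[of "j - y"] False unfolding Pc
          by (intro exI[of _ "cmap C (j - y)"]) (auto simp: diag_sel y_def c_def)
      qed
    qed
  qed (use w in auto)
qed



definition EQ :: "trm \<Rightarrow> trm \<Rightarrow> bool" where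
  "EQ f g \<longleftrightarrow> eqv f g \<and> Sim f g \<and> Sim g f"

lemma EQ_wt: "EQ f g \<Longrightarrow> wt f \<and> wt g \<and> tdom f = tdom g \<and> tcod f = tcod g"
  unfolding EQ_def Sim_def by blast

lemma EQ_sym: "EQ f g \<Longrightarrow> EQ g f"
  unfolding EQ_def using eqv.sym by blast

lemma EQ_trans: "EQ f g \<Longrightarrow> EQ g h \<Longrightarrow> EQ f h"
  unfolding EQ_def using eqv.trans[of f g h] Sim_trans[of f g h] Sim_trans[of h g f] by blast

lemma EQ_refl: "wt f \<Longrightarrow> EQ f f"
proof -
  assume w: "wt f"
  then have "typed f (tdom f) (tcod f)" by (simp add: typed_iff)
  then have "eqv f f" by (rule eqv.refl)
  then show ?thesis using Sim_refl[OF w] by (simp add: EQ_def)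
qed

lemma EQ_comp:
  assumes h: "EQ f f'" "EQ g g'" "tcod f = tdom g"
  shows "EQ (Comp f g) (Comp f' g')"
proof -
  have w: "wt f" "wt f'" "tdom f = tdom f'" "tcod f = tcod f'" "wt g" "wt g'" "tdom g = tdom g'" "tcod g = tcod g'"
    using EQ_wt[OF h(1)] EQ_wt[OF h(2)] by auto
  have hs: "eqv f f'" "Sim f f'" "Sim f' f" "eqv g g'" "Sim g g'" "Sim g' g" using h unfolding EQ_def by blast+
  have t: "typed f (tdom f) (tcod f)" "typed g (tcod f) (tcod g)" "typed f' (tdom f) (tcod f)" "typed g' (tcod f) (tcod g)"
    using w h(3) by (simp_all only: typed_iff)
  have e: "eqv (Comp f g) (Comp f' g')"
    by (rule eqv.comp_cong[OF _ _ t]) (use hs in auto)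
  have s1: "Sim (Comp f g) (Comp f' g')" by (rule Sim_comp) (use hs h(3) in auto)
  have s2: "Sim (Comp f' g') (Comp f g)" by (rule Sim_comp) (use hs h(3) w in auto)
  show ?thesis using e s1 s2 by (simp only: EQ_def)
qed

lemma EQ_tens:
  assumes h: "EQ f f'" "EQ g g'"
  shows "EQ (Tens f g) (Tens f' g')"
proof -
  have w: "wt f" "wt f'" "tdom f = tdom f'" "tcod f = tcod f'" "wt g" "wt g'" "tdom g = tdom g'" "tcod g = tcod g'"
    using EQ_wt[OF h(1)] EQ_wt[OF h(2)] by auto
  have hs: "eqv f f'" "Sim f f'" "Sim f' f" "eqv g g'" "Sim g g'" "Sim g' g" using h unfolding EQ_def by blast+
  have t: "typed f (tdom f) (tcod f)" "typed g (tdom g) (tcod g)" "typed f' (tdom f) (tcod f)" "typed g' (tdom g) (tcod g)"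
    using w by (simp_all only: typed_iff)
  have e: "eqv (Tens f g) (Tens f' g')"
    by (rule eqv.tens_cong[OF _ _ t]) (use hs in auto)
  have s1: "Sim (Tens f g) (Tens f' g')" by (rule Sim_tens) (use hs in auto)
  have s2: "Sim (Tens f' g') (Tens f g)" by (rule Sim_tens) (use hs in auto)
  show ?thesis using e s1 s2 by (simp only: EQ_def)
qed

lemma EQ_id_left: "wt f \<Longrightarrow> A = tdom f \<Longrightarrow> EQ (Comp (Id A) f) f"
  unfolding EQ_def using Sim_id_left[of f A] eqv.id_left[of f A "tcod f"] by (simp add: typed_iff)

lemma EQ_id_right: "wt f \<Longrightarrow> B = tcod f \<Longrightarrow> EQ (Comp f (Id B)) f"
  unfolding EQ_def using Sim_id_right[of f B] eqv.id_right[of f "tdom f" B] by (simp add: typed_iff)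

lemma EQ_assoc: "wt f \<Longrightarrow> wt g \<Longrightarrow> wt h \<Longrightarrow> tcod f = tdom g \<Longrightarrow> tcod g = tdom h \<Longrightarrow>
   EQ (Comp (Comp f g) h) (Comp f (Comp g h))"
  unfolding EQ_def using Sim_assoc[of f g h] eqv.comp_assoc[of f "tdom f" "tcod f" g "tcod g" h "tcod h"]
  by (simp add: typed_iff)

lemma EQ_tens_unit_left: "wt f \<Longrightarrow> EQ (Tens (Id []) f) f"
  unfolding EQ_def using Sim_tens_unit_left[of f] eqv.tens_unit_left[of f "tdom f" "tcod f"]
  by (simp add: typed_iff)

lemma EQ_tens_unit_right: "wt f \<Longrightarrow> EQ (Tens f (Id [])) f"
  unfolding EQ_def using Sim_tens_unit_right[of f] eqv.tens_unit_right[of f "tdom f" "tcod f"]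
  by (simp add: typed_iff)

lemma EQ_tens_id: "EQ (Tens (Id A) (Id B)) (Id (A @ B))"
  unfolding EQ_def using Sim_tens_id[of A B] eqv.tens_id[of A B] by simp

lemma EQ_tens_assoc: "wt f \<Longrightarrow> wt g \<Longrightarrow> wt h \<Longrightarrow> EQ (Tens (Tens f g) h) (Tens f (Tens g h))"
  unfolding EQ_def using Sim_tens_assoc[of f g h]
    eqv.tens_assoc[of f "tdom f" "tcod f" g "tdom g" "tcod g" h "tdom h" "tcod h"]
  by (simp add: typed_iff)

lemma EQ_interchange: "wt f \<Longrightarrow> wt g \<Longrightarrow> wt h \<Longrightarrow> wt k \<Longrightarrow> tcod f = tdom g \<Longrightarrow> tcod h = tdom k \<Longrightarrow>
  EQ (Tens (Comp f g) (Comp h k)) (Comp (Tens f h) (Tens g k))"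
  unfolding EQ_def using Sim_interchange[of f g h k]
    eqv.interchange[of f "tdom f" "tcod f" g "tcod g" h "tdom h" "tcod h" k "tcod k"]
  by (simp add: typed_iff)

lemma EQ_br_inv_nil: "EQ (Comp (BrInv Y []) (Br Y [])) (Id Y)"
proof -
  have e: "eqv (Comp (BrInv Y []) (Br Y [])) (Id Y)" using eqv.br_inv2[of Y "[]"] by simp
  have s1: "Sim (Comp (BrInv Y []) (Br Y [])) (Comp (Id Y) (Id Y))"
    by (rule Sim_comp; simp add: Sim_Br_nil)
  have s2: "Sim (Comp (Id Y) (Id Y)) (Comp (BrInv Y []) (Br Y []))"
    by (rule Sim_comp; simp add: Sim_Br_nil)
  have s3: "Sim (Comp (Id Y) (Id Y)) (Id Y)" "Sim (Id Y) (Comp (Id Y) (Id Y))"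
    using Sim_id_left[of "Id Y" Y] by simp_all
  show ?thesis unfolding EQ_def using e s1 s2 s3 Sim_trans by blast
qed

lemma EQ_br_nat_special:
  assumes w: "wt C" "tdom C = []" "X = tcod C"
  shows "EQ (Comp (Tens (Id Y) C) (Br Y X)) (Comp (Br Y []) (Tens C (Id Y)))"
proof -
  have e: "eqv (Comp (Tens (Id Y) C) (Br Y X)) (Comp (Br Y []) (Tens C (Id Y)))"
    using eqv.br_nat[of "Id Y" Y Y C "[]" X] w by (simp add: typed_iff)
  note b = Sim_braid[OF w, of Y]
  have s1: "Sim (Comp (Br Y []) (Tens C (Id Y))) (Comp (Id Y) (Tens C (Id Y)))"
    by (rule Sim_comp; use w in \<open>simp add: Sim_Br_nil Sim_refl\<close>)
  have s2: "Sim (Comp (Id Y) (Tens C (Id Y))) (Comp (Br Y []) (Tens C (Id Y)))"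
    by (rule Sim_comp; use w in \<open>simp add: Sim_Br_nil Sim_refl\<close>)
  have s3: "Sim (Comp (Id Y) (Tens C (Id Y))) (Tens C (Id Y))" "Sim (Tens C (Id Y)) (Comp (Id Y) (Tens C (Id Y)))"
    using Sim_id_left[of "Tens C (Id Y)" Y] w by simp_all
  show ?thesis unfolding EQ_def using e b s1 s2 s3 Sim_trans by blast
qed




lemmas [trans] = EQ_trans

lemma EQ_slide:
  assumes w: "wt f" "wt C" "tdom C = []"
  shows "EQ (Comp f (Tens (Id (tcod f)) C)) (Comp (Tens (Id (tdom f)) C) (Tens f (Id (tcod C))))"
proof -
  have "EQ (Comp f (Tens (Id (tcod f)) C)) (Comp (Tens f (Id [])) (Tens (Id (tcod f)) C))"
    by (rule EQ_comp[OF EQ_sym[OF EQ_tens_unit_right[OF w(1)]] EQ_refl]) (use w in auto)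
  also have "EQ \<dots> (Tens (Comp f (Id (tcod f))) (Comp (Id []) C))"
    by (rule EQ_sym[OF EQ_interchange]) (use w in auto)
  also have "EQ \<dots> (Tens f C)"
    by (rule EQ_tens[OF EQ_id_right EQ_id_left]) (use w in auto)
  also have "EQ \<dots> (Tens (Comp (Id (tdom f)) f) (Comp C (Id (tcod C))))"
    by (rule EQ_sym[OF EQ_tens[OF EQ_id_left EQ_id_right]]) (use w in auto)
  also have "EQ \<dots> (Comp (Tens (Id (tdom f)) C) (Tens f (Id (tcod C))))"
    by (rule EQ_interchange) (use w in auto)
  finally show ?thesis .
qed

definition sigma :: "obj \<Rightarrow> obj \<Rightarrow> trm" where
  "sigma Y X = Comp (Tens (BrInv Y []) (Id X)) (Br Y X)"

lemma EQ_swap: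
  assumes w: "wt C" "tdom C = []"
  shows "EQ (Tens C (Id Y)) (Comp (Tens (Id Y) C) (sigma Y (tcod C)))"
proof -
  let ?X = "tcod C"
  have "EQ (Tens C (Id Y)) (Comp (Id Y) (Tens C (Id Y)))"
    by (rule EQ_sym[OF EQ_id_left]) (use w in auto)
  also have "EQ \<dots> (Comp (Comp (BrInv Y []) (Br Y [])) (Tens C (Id Y)))"
    by (rule EQ_comp[OF EQ_sym[OF EQ_br_inv_nil] EQ_refl]) (use w in auto)
  also have "EQ \<dots> (Comp (BrInv Y []) (Comp (Br Y []) (Tens C (Id Y))))"
    by (rule EQ_assoc) (use w in auto)
  also have "EQ \<dots> (Comp (BrInv Y []) (Comp (Tens (Id Y) C) (Br Y ?X)))"
    by (rule EQ_comp[OF EQ_refl EQ_sym[OF EQ_br_nat_special]]) (use w in auto)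
  also have "EQ \<dots> (Comp (Comp (BrInv Y []) (Tens (Id Y) C)) (Br Y ?X))"
    by (rule EQ_sym[OF EQ_assoc]) (use w in auto)
  also have "EQ \<dots> (Comp (Comp (Tens (Id Y) C) (Tens (BrInv Y []) (Id ?X))) (Br Y ?X))"
  proof (rule EQ_comp[OF _ EQ_refl])
    have "EQ (Comp (BrInv Y []) (Tens (Id (tcod (BrInv Y []))) C))
        (Comp (Tens (Id (tdom (BrInv Y []))) C) (Tens (BrInv Y []) (Id (tcod C))))"
      by (rule EQ_slide) (use w in auto)
    then show "EQ (Comp (BrInv Y []) (Tens (Id Y) C)) (Comp (Tens (Id Y) C) (Tens (BrInv Y []) (Id ?X)))"
      by simp
  qed (use w in auto)
  also have "EQ \<dots> (Comp (Tens (Id Y) C) (sigma Y ?X))"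
    unfolding sigma_def by (rule EQ_assoc) (use w in auto)
  finally show ?thesis .
qed

lemma sigma_simps[simp]: "wt (sigma Y X)" "tdom (sigma Y X) = Y @ X" "tcod (sigma Y X) = X @ Y" "gens (sigma Y X) = {}"
  by (simp_all add: sigma_def)

lemma EQ_base: "wt t \<Longrightarrow> EQ t (Comp (Tens (Id (tdom t)) (Id [])) t)"
proof -
  assume w: "wt t"
  have "EQ t (Comp (Id (tdom t)) t)" by (rule EQ_sym[OF EQ_id_left]) (use w in auto)
  also have "EQ \<dots> (Comp (Tens (Id (tdom t)) (Id [])) t)"
    by (rule EQ_comp[OF EQ_sym[OF EQ_tens_unit_right] EQ_refl]) (use w in auto)
  finally show ?thesis .
qed

lemma EQ_cap: "EQ (Gen g) (Comp (Tens (Id []) (Gen g)) (Id (gcod g)))"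
proof -
  have "EQ (Gen g) (Comp (Gen g) (Id (gcod g)))" by (rule EQ_sym[OF EQ_id_right]) auto
  also have "EQ \<dots> (Comp (Tens (Id []) (Gen g)) (Id (gcod g)))"
    by (rule EQ_comp[OF EQ_sym[OF EQ_tens_unit_left] EQ_refl]) auto
  finally show ?thesis .
qed

lemma EQ_merge0:
  assumes w: "wt C1" "wt C2" "tdom C2 = []"
  shows "EQ (Comp C1 (Tens (Id (tcod C1)) C2)) (Tens C1 C2)"
proof -
  have "EQ (Comp C1 (Tens (Id (tcod C1)) C2)) (Comp (Tens C1 (Id [])) (Tens (Id (tcod C1)) C2))"
    by (rule EQ_comp[OF EQ_sym[OF EQ_tens_unit_right] EQ_refl]) (use w in auto)
  also have "EQ \<dots> (Tens (Comp C1 (Id (tcod C1))) (Comp (Id []) C2))"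
    by (rule EQ_sym[OF EQ_interchange]) (use w in auto)
  also have "EQ \<dots> (Tens C1 C2)"
    by (rule EQ_tens[OF EQ_id_right EQ_id_left]) (use w in auto)
  finally show ?thesis .
qed

lemma EQ_merge:
  assumes w: "wt C1" "wt C2" "tdom C1 = []" "tdom C2 = []"
  shows "EQ (Comp (Tens (Id A) C1) (Tens (Id (A @ tcod C1)) C2)) (Tens (Id A) (Tens C1 C2))"
proof -
  have "EQ (Comp (Tens (Id A) C1) (Tens (Id (A @ tcod C1)) C2))
      (Comp (Tens (Id A) C1) (Tens (Tens (Id A) (Id (tcod C1))) C2))"
    by (rule EQ_comp[OF EQ_refl EQ_tens[OF EQ_sym[OF EQ_tens_id] EQ_refl]]) (use w in auto)
  also have "EQ \<dots> (Comp (Tens (Id A) C1) (Tens (Id A) (Tens (Id (tcod C1)) C2)))"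
    by (rule EQ_comp[OF EQ_refl EQ_tens_assoc]) (use w in auto)
  also have "EQ \<dots> (Tens (Comp (Id A) (Id A)) (Comp C1 (Tens (Id (tcod C1)) C2)))"
    by (rule EQ_sym[OF EQ_interchange]) (use w in auto)
  also have "EQ \<dots> (Tens (Id A) (Tens C1 C2))"
    by (rule EQ_tens[OF EQ_id_left EQ_merge0]) (use w in auto)
  finally show ?thesis .
qed

lemma EQ_top:
  assumes w: "wt C1" "wt C2" "tdom C1 = []" "tdom C2 = []"
  shows "EQ (Tens (Tens (Id A) C1) (Tens (Id A2) C2))
     (Comp (Tens (Id (A @ A2)) (Tens C1 C2)) (Tens (Id A) (Tens (sigma A2 (tcod C1)) (Id (tcod C2)))))"
proof -
  let ?X1 = "tcod C1" and ?X2 = "tcod C2"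
  have inner: "EQ (Tens C1 (Tens (Id A2) C2)) (Comp (Tens (Id A2) (Tens C1 C2)) (Tens (sigma A2 ?X1) (Id ?X2)))"
  proof -
    have "EQ (Tens C1 (Tens (Id A2) C2)) (Tens (Tens C1 (Id A2)) C2)"
      by (rule EQ_sym[OF EQ_tens_assoc]) (use w in auto)
    also have "EQ \<dots> (Tens (Comp (Tens (Id A2) C1) (sigma A2 ?X1)) (Comp C2 (Id ?X2)))"
      by (rule EQ_tens[OF EQ_swap EQ_sym[OF EQ_id_right]]) (use w in auto)
    also have "EQ \<dots> (Comp (Tens (Tens (Id A2) C1) C2) (Tens (sigma A2 ?X1) (Id ?X2)))"
      by (rule EQ_interchange) (use w in auto)
    also have "EQ \<dots> (Comp (Tens (Id A2) (Tens C1 C2)) (Tens (sigma A2 ?X1) (Id ?X2)))"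
      by (rule EQ_comp[OF EQ_tens_assoc EQ_refl]) (use w in auto)
    finally show ?thesis .
  qed
  have "EQ (Tens (Tens (Id A) C1) (Tens (Id A2) C2)) (Tens (Id A) (Tens C1 (Tens (Id A2) C2)))"
    by (rule EQ_tens_assoc) (use w in auto)
  also have "EQ \<dots> (Tens (Comp (Id A) (Id A)) (Comp (Tens (Id A2) (Tens C1 C2)) (Tens (sigma A2 ?X1) (Id ?X2))))"
    by (rule EQ_tens[OF EQ_sym[OF EQ_id_left] inner]) auto
  also have "EQ \<dots> (Comp (Tens (Id A) (Tens (Id A2) (Tens C1 C2))) (Tens (Id A) (Tens (sigma A2 ?X1) (Id ?X2))))"
    by (rule EQ_interchange) (use w in auto)
  also have "EQ \<dots> (Comp (Tens (Id (A @ A2)) (Tens C1 C2)) (Tens (Id A) (Tens (sigma A2 ?X1) (Id ?X2))))"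
  proof (rule EQ_comp[OF _ EQ_refl])
    have "EQ (Tens (Id A) (Tens (Id A2) (Tens C1 C2))) (Tens (Tens (Id A) (Id A2)) (Tens C1 C2))"
      by (rule EQ_sym[OF EQ_tens_assoc]) (use w in auto)
    also have "EQ \<dots> (Tens (Id (A @ A2)) (Tens C1 C2))"
      by (rule EQ_tens[OF EQ_tens_id EQ_refl]) (use w in auto)
    finally show "EQ (Tens (Id A) (Tens (Id A2) (Tens C1 C2))) (Tens (Id (A @ A2)) (Tens C1 C2))" .
  qed (use w in auto)
  finally show ?thesis .
qed

definition capfree :: "trm \<Rightarrow> bool" where "capfree t \<longleftrightarrow> gens t \<inter> {CapR, CapL} = {}"
definition cupfree :: "trm \<Rightarrow> bool" where "cupfree t \<longleftrightarrow> gens t \<inter> {CupR, CupL} = {}"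

lemma main_nf:
  "wt t \<Longrightarrow> \<exists>C R. wt C \<and> tdom C = [] \<and> cupfree C \<and> wt R \<and> tdom R = tdom t @ tcod C
     \<and> tcod R = tcod t \<and> capfree R \<and> EQ t (Comp (Tens (Id (tdom t)) C) R)"
proof (induction t)
  case (Id A)
  then show ?case using EQ_base[of "Id A"]
    by (intro exI[of _ "Id []"] exI[of _ "Id A"]) (auto simp: capfree_def cupfree_def)
next
  case (Gen g)
  show ?case
  proof (cases g)
    case CapR
    then show ?thesis using EQ_cap[of g]
      by (intro exI[of _ "Gen g"] exI[of _ "Id (gcod g)"]) (auto simp: capfree_def cupfree_def)
  next
    case CapL
    then show ?thesis using EQ_cap[of g]
      by (intro exI[of _ "Gen g"] exI[of _ "Id (gcod g)"]) (auto simp: capfree_def cupfree_def)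
  next
    case CupR
    then show ?thesis using EQ_base[of "Gen g"]
      by (intro exI[of _ "Id []"] exI[of _ "Gen g"]) (auto simp: capfree_def cupfree_def)
  next
    case CupL
    then show ?thesis using EQ_base[of "Gen g"]
      by (intro exI[of _ "Id []"] exI[of _ "Gen g"]) (auto simp: capfree_def cupfree_def)
  qed
next
  case (Br A B)
  then show ?case using EQ_base[of "Br A B"]
    by (intro exI[of _ "Id []"] exI[of _ "Br A B"]) (auto simp: capfree_def cupfree_def)
next
  case (BrInv A B)
  then show ?case using EQ_base[of "BrInv A B"]
    by (intro exI[of _ "Id []"] exI[of _ "BrInv A B"]) (auto simp: capfree_def cupfree_def)
next
  case (Comp f g)
  have wf: "wt f" "wt g" "tcod f = tdom g" using Comp.prems by auto
  obtain C1 R1 where h1: "wt C1" "tdom C1 = []" "cupfree C1" "wt R1" "tdom R1 = tdom f @ tcod C1"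
     "tcod R1 = tcod f" "capfree R1" "EQ f (Comp (Tens (Id (tdom f)) C1) R1)"
    using Comp.IH(1)[OF wf(1)] by blast
  obtain C2 R2 where h2: "wt C2" "tdom C2 = []" "cupfree C2" "wt R2" "tdom R2 = tdom g @ tcod C2"
     "tcod R2 = tcod g" "capfree R2" "EQ g (Comp (Tens (Id (tdom g)) C2) R2)"
    using Comp.IH(2)[OF wf(2)] by blast
  let ?A = "tdom f" and ?X1 = "tcod C1" and ?X2 = "tcod C2"
  let ?S = "Comp (Tens R1 (Id ?X2)) R2"
  have "EQ (Comp f g) (Comp (Comp (Tens (Id ?A) C1) R1) (Comp (Tens (Id (tdom g)) C2) R2))"
    by (rule EQ_comp[OF h1(8) h2(8) wf(3)])
  also have "EQ \<dots> (Comp (Tens (Id ?A) C1) (Comp R1 (Comp (Tens (Id (tdom g)) C2) R2)))"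
    by (rule EQ_assoc) (use h1 h2 wf in auto)
  also have "EQ \<dots> (Comp (Tens (Id ?A) C1) (Comp (Tens (Id (?A @ ?X1)) C2) ?S))"
  proof (rule EQ_comp[OF EQ_refl])
    have "EQ (Comp R1 (Comp (Tens (Id (tdom g)) C2) R2)) (Comp (Comp R1 (Tens (Id (tdom g)) C2)) R2)"
      by (rule EQ_sym[OF EQ_assoc]) (use h1 h2 wf in auto)
    also have "EQ \<dots> (Comp (Comp (Tens (Id (?A @ ?X1)) C2) (Tens R1 (Id ?X2))) R2)"
      by (rule EQ_comp[OF _ EQ_refl]) (use EQ_slide[of R1 C2] h1 h2 wf in auto)
    also have "EQ \<dots> (Comp (Tens (Id (?A @ ?X1)) C2) ?S)"
      by (rule EQ_assoc) (use h1 h2 wf in auto)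
    finally show "EQ (Comp R1 (Comp (Tens (Id (tdom g)) C2) R2)) (Comp (Tens (Id (?A @ ?X1)) C2) ?S)" .
  qed (use h1 h2 wf in auto)
  also have "EQ \<dots> (Comp (Comp (Tens (Id ?A) C1) (Tens (Id (?A @ ?X1)) C2)) ?S)"
    by (rule EQ_sym[OF EQ_assoc]) (use h1 h2 wf in auto)
  also have "EQ \<dots> (Comp (Tens (Id ?A) (Tens C1 C2)) ?S)"
    by (rule EQ_comp[OF EQ_merge EQ_refl]) (use h1 h2 wf in auto)
  finally have e: "EQ (Comp f g) (Comp (Tens (Id ?A) (Tens C1 C2)) ?S)" .
  show ?case
    by (intro exI[of _ "Tens C1 C2"] exI[of _ ?S])
      (use e h1 h2 wf in \<open>auto simp: capfree_def cupfree_def\<close>)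
next
  case (Tens f g)
  have wf: "wt f" "wt g" using Tens.prems by auto
  obtain C1 R1 where h1: "wt C1" "tdom C1 = []" "cupfree C1" "wt R1" "tdom R1 = tdom f @ tcod C1"
     "tcod R1 = tcod f" "capfree R1" "EQ f (Comp (Tens (Id (tdom f)) C1) R1)"
    using Tens.IH(1)[OF wf(1)] by blast
  obtain C2 R2 where h2: "wt C2" "tdom C2 = []" "cupfree C2" "wt R2" "tdom R2 = tdom g @ tcod C2"
     "tcod R2 = tcod g" "capfree R2" "EQ g (Comp (Tens (Id (tdom g)) C2) R2)"
    using Tens.IH(2)[OF wf(2)] by blast
  let ?A = "tdom f" and ?A2 = "tdom g" and ?X1 = "tcod C1" and ?X2 = "tcod C2"
  let ?M = "Tens (Id ?A) (Tens (sigma ?A2 ?X1) (Id ?X2))"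
  let ?R = "Comp ?M (Tens R1 R2)"
  have "EQ (Tens f g) (Tens (Comp (Tens (Id ?A) C1) R1) (Comp (Tens (Id ?A2) C2) R2))"
    by (rule EQ_tens[OF h1(8) h2(8)])
  also have "EQ \<dots> (Comp (Tens (Tens (Id ?A) C1) (Tens (Id ?A2) C2)) (Tens R1 R2))"
    by (rule EQ_interchange) (use h1 h2 wf in auto)
  also have "EQ \<dots> (Comp (Comp (Tens (Id (?A @ ?A2)) (Tens C1 C2)) ?M) (Tens R1 R2))"
    by (rule EQ_comp[OF EQ_top EQ_refl]) (use h1 h2 wf in auto)
  also have "EQ \<dots> (Comp (Tens (Id (?A @ ?A2)) (Tens C1 C2)) ?R)"
    by (rule EQ_assoc) (use h1 h2 wf in auto)
  finally have e: "EQ (Tens f g) (Comp (Tens (Id (?A @ ?A2)) (Tens C1 C2)) ?R)" .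
  show ?case
    by (intro exI[of _ "Tens C1 C2"] exI[of _ ?R])
      (use e h1 h2 wf in \<open>auto simp: capfree_def cupfree_def\<close>)
qed


theorem mainTheorem6:
  assumes "knot k"
  shows "\<exists>k'. eqv k k' \<and> knot k' \<and> bridge_position k'"
proof -
  have tk: "typed k [] []" using assms by (simp add: knot_def)
  then have w: "wt k" "tdom k = []" "tcod k = []" by (simp_all add: typed_iff)
  obtain C R where h: "wt C" "tdom C = []" "cupfree C" "wt R" "tdom R = tdom k @ tcod C"
     "tcod R = tcod k" "capfree R" "EQ k (Comp (Tens (Id (tdom k)) C) R)"
    using main_nf[OF w(1)] by blast
  let ?k' = "Comp (Tens (Id []) C) R"
  have e: "EQ k ?k'" using h(8) w by simp
  have "eqv k ?k'" using e by (simp add: EQ_def)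
  moreover have "knot ?k'" using Sim_knot[OF assms] e by (simp add: EQ_def)
  moreover have "bridge_position ?k'"
    unfolding bridge_position_def
    by (intro exI[of _ "Tens (Id []) C"] exI[of _ R] exI[of _ "tcod C"])
      (use h w in \<open>auto simp: typed_iff capfree_def cupfree_def\<close>)
  ultimately show ?thesis by blast
qed

end
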